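(* Fix $\varepsilon>0$. Then there exists $\gamma=\gamma(\varepsilon)>0$ such that for every $n$ there exist two sets $X_1,X_2\subseteq\mathbb{R}^2$ with $|X_1|,|X_2|\le n$ such that (i) the diameter of $X_2$ is at most $\varepsilon$, and (ii) the number of pairs $(x_1,x_2)\in X_1\times X_2$ with $\|x_1-x_2\|=1$ is at least $\gamma\, u_2(n,n)$.
   Context: $u_2(m,n)$ denotes the maximum, over sets $A$ of $m$ points and $B$ of $n$ points in $\mathbb{R}^2$, of the number of pairs $(a,b)\in A\times B$ with $\|a-b\|=1$ (equivalently, the maximum number of incidences between $m$ points and $n$ unit circles in the plane). *)

theory Defs
  imports "HOL-Analysis.Analysis"
begin

definition unit_pairs :: "(real^2) set \<Rightarrow> (real^2) set \<Rightarrow> nat" where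
  "unit_pairs A B = card {(a, b). a \<in> A \<and> b \<in> B \<and> dist a b = 1}"

definition u2 :: "nat \<Rightarrow> nat \<Rightarrow> nat" where
  "u2 m n = Max {unit_pairs A B | A B. finite A \<and> finite B \<and> card A = m \<and> card B = n}"

end

theory Submission
  imports Defs "HOL-Library.Countable"
begin

lemma u2_attained:
  "\<exists>A B :: (real^2) set. finite A \<and> finite B \<and> card A = n \<and> card B = n \<and> unit_pairs A B = u2 n n"
proof -
  let ?S = "{unit_pairs A B | A B. finite A \<and> finite B \<and> card A = n \<and> card B = n}"
  define A0 :: "(real^2) set" where "A0 = (\<lambda>i. vector [real i, 0]) ` {..<n}"
  have inj: "inj_on (\<lambda>i::nat. (vector [real i, 0] :: real^2)) {..<n}"
  proof (rule inj_onI)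
    fix x y assume "(vector [real x, 0] :: real^2) = vector [real y, 0]"
    then have "(vector [real x, 0] :: real^2) $ 1 = vector [real y, 0] $ 1" by simp
    then show "x = y" by simp
  qed
  have cA0: "card A0 = n" unfolding A0_def using card_image[OF inj] by simp
  have ne: "?S \<noteq> {}" using cA0 unfolding A0_def by blast
  have bd: "?S \<subseteq> {..n*n}"
  proof
    fix x assume "x \<in> ?S"
    then obtain A B where AB: "finite A" "finite B" "card A = n" "card B = n" "x = unit_pairs A B" by blast
    have "{(a, b). a \<in> A \<and> b \<in> B \<and> dist a b = 1} \<subseteq> A \<times> B" by auto
    then have "x \<le> card (A \<times> B)" unfolding AB(5) unit_pairs_def
      by (intro card_mono) (auto simp: AB)
    then show "x \<in> {..n*n}" using AB by (simp add: card_cartesian_product)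
  qed
  have fin: "finite ?S" using bd finite_subset by blast
  have "u2 n n \<in> ?S" unfolding u2_def using Max_in[OF fin ne] by simp
  then obtain A B where "u2 n n = unit_pairs A B" "finite A" "finite B" "card A = n" "card B = n"
    unfolding mem_Collect_eq by (elim exE conjE) simp
  then show ?thesis by metis
qed

lemma pigeon:
  fixes f :: "'a \<Rightarrow> nat"
  assumes "finite C" "C \<noteq> {}" "real (\<Sum>c\<in>C. f c) \<ge> T"
  shows "\<exists>c\<in>C. real (f c) \<ge> T / real (card C)"
proof (rule ccontr)
  assume "\<not> ?thesis"
  then have lt: "\<And>c. c \<in> C \<Longrightarrow> real (f c) < T / real (card C)" by force
  have "real (\<Sum>c\<in>C. f c) = (\<Sum>c\<in>C. real (f c))" by simp
  also have "\<dots> < (\<Sum>c\<in>C. T / real (card C))"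
    using lt assms(1,2) by (intro sum_strict_mono) auto
  also have "\<dots> = T" using assms(1,2) by simp
  finally show False using assms(3) by simp
qed

lemma floor_sep:
  fixes u v :: real and m :: int
  assumes "m > 0" "\<lfloor>u\<rfloor> mod m = \<lfloor>v\<rfloor> mod m" "\<lfloor>u\<rfloor> \<noteq> \<lfloor>v\<rfloor>"
  shows "\<bar>u - v\<bar> > real_of_int m - 1"
proof -
  have "m dvd (\<lfloor>u\<rfloor> - \<lfloor>v\<rfloor>)" using assms(2) by (simp add: mod_eq_dvd_iff)
  then obtain k where k: "\<lfloor>u\<rfloor> - \<lfloor>v\<rfloor> = m * k" by (auto simp: dvd_def)
  have "k \<noteq> 0" using k assms(3) by auto
  then have "\<bar>m * k\<bar> \<ge> m" using assms(1) by (simp add: abs_mult)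
  then have I: "\<bar>\<lfloor>u\<rfloor> - \<lfloor>v\<rfloor>\<bar> \<ge> m" using k by simp
  have a: "real_of_int \<lfloor>u\<rfloor> \<le> u" "u < real_of_int \<lfloor>u\<rfloor> + 1" by linarith+
  have b: "real_of_int \<lfloor>v\<rfloor> \<le> v" "v < real_of_int \<lfloor>v\<rfloor> + 1" by linarith+
  have "\<bar>real_of_int \<lfloor>u\<rfloor> - real_of_int \<lfloor>v\<rfloor>\<bar> \<ge> real_of_int m" using I
    by (metis of_int_abs of_int_diff of_int_le_iff)
  then show ?thesis using a b by linarith
qed

theorem proposition3p2:
  fixes \<epsilon> :: real
  assumes "\<epsilon> > 0"
  shows "\<exists>\<gamma>::real. \<gamma> > 0 \<and>
    (\<forall>n::nat. \<exists>X1 X2 :: (real^2) set.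
        finite X1 \<and> finite X2 \<and> card X1 \<le> n \<and> card X2 \<le> n \<and>
        diameter X2 \<le> \<epsilon> \<and>
        real (unit_pairs X1 X2) \<ge> \<gamma> * real (u2 n n))"
proof -
  define s where "s = \<epsilon> / 3"
  have s0: "s > 0" using assms by (simp add: s_def)
  define m :: nat where "m = nat \<lceil>2 / s\<rceil> + 1"
  have m1: "m \<ge> 1" by (simp add: m_def)
  have ms: "(real m - 1) * s \<ge> 2"
  proof -
    have "real m - 1 \<ge> 2 / s" unfolding m_def by linarith
    then show ?thesis using s0 by (simp add: field_simps)
  qed
  define \<gamma> :: real where "\<gamma> = 1 / real (card ({0..<int m} \<times> {0..<int m}))"
  have cardC: "card ({0..<int m} \<times> {0..<int m}) = m * m" by (simp add: card_cartesian_product)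
  have g0: "\<gamma> > 0" unfolding \<gamma>_def cardC using m1 by simp
  have "\<forall>n::nat. \<exists>X1 X2 :: (real^2) set.
        finite X1 \<and> finite X2 \<and> card X1 \<le> n \<and> card X2 \<le> n \<and>
        diameter X2 \<le> \<epsilon> \<and>
        real (unit_pairs X1 X2) \<ge> \<gamma> * real (u2 n n)"
  proof
    fix n :: nat
    obtain A B :: "(real^2) set" where AB: "finite A" "finite B" "card A = n" "card B = n"
      "unit_pairs A B = u2 n n" using u2_attained by blast
    define P where "P = {(a, b). a \<in> A \<and> b \<in> B \<and> dist a b = 1}"
    have finP: "finite P" unfolding P_def
      by (rule finite_subset[of _ "A \<times> B"]) (auto simp: AB)
    define cell :: "real^2 \<Rightarrow> int \<times> int" where "cell b = (\<lfloor>b$1 / s\<rfloor>, \<lfloor>b$2 / s\<rfloor>)" for b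
    define col :: "real^2 \<Rightarrow> int \<times> int" where
      "col b = (\<lfloor>b$1 / s\<rfloor> mod int m, \<lfloor>b$2 / s\<rfloor> mod int m)" for b
    define C where "C = {0..<int m} \<times> {0..<int m}"
    have finC: "finite C" and neC: "C \<noteq> {}" using m1 by (auto simp: C_def)
    have colC: "(\<lambda>p. col (snd p)) ` P \<subseteq> C" using m1 by (auto simp: C_def col_def)
    have "(\<Sum>c\<in>C. card {p \<in> P. col (snd p) = c}) = (\<Sum>c\<in>C. \<Sum>p\<in>{p \<in> P. col (snd p) = c}. (1::nat))"
      by simp
    also have "\<dots> = (\<Sum>p\<in>P. (1::nat))" by (rule sum.group[OF finP finC colC])
    also have "\<dots> = card P" by simp
    finally have sumeq: "(\<Sum>c\<in>C. card {p \<in> P. col (snd p) = c}) = card P" .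
    obtain c where cC: "c \<in> C" and cbig: "real (card {p \<in> P. col (snd p) = c}) \<ge> real (card P) / real (card C)"
      using pigeon[OF finC neC, where f="\<lambda>c. card {p \<in> P. col (snd p) = c}" and T="real (card P)"] sumeq by auto
    define Pc where "Pc = {p \<in> P. col (snd p) = c}"
    have finPc: "finite Pc" using finP by (simp add: Pc_def)
    define Bc where "Bc = snd ` Pc"
    have finBc: "finite Bc" using finPc by (simp add: Bc_def)
    have BcB: "Bc \<subseteq> B" by (auto simp: Bc_def Pc_def P_def)
    define K where "K = cell ` Bc"
    have finK: "finite K" using finBc by (simp add: K_def)
    define h :: "int \<times> int \<Rightarrow> real" where "h k = real (to_nat k)" for k
    have hinj: "h k = h k' \<Longrightarrow> k = k'" for k k' by (simp add: h_def)
    have h0: "h k \<ge> 0" for k by (simp add: h_def)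
    define M where "M = (\<Sum>k\<in>K. h k)"
    have hM: "k \<in> K \<Longrightarrow> h k \<le> M" for k unfolding M_def
      by (rule member_le_sum) (auto simp: h0 finK)
    have M0: "M \<ge> 0" unfolding M_def by (simp add: h0 sum_nonneg)
    define \<eta>0 where "\<eta>0 = s / (M + 1)"
    have e0: "\<eta>0 > 0" using s0 M0 by (simp add: \<eta>0_def)
    define bad where "bad = (\<lambda>(b, b'). ((b'$1 - s * of_int (fst (cell b'))) - (b$1 - s * of_int (fst (cell b))))
        / (h (cell b) - h (cell b'))) ` (Bc \<times> Bc)"
    have finbad: "finite bad" using finBc by (simp add: bad_def)
    have "infinite ({0<..<\<eta>0} - bad)" using e0 finbad by (simp add: infinite_Ioo)
    then have "{0<..<\<eta>0} - bad \<noteq> {}" by (metis finite.emptyI)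
    then obtain \<eta> where "\<eta> \<in> {0<..<\<eta>0} - bad" by blast
    then have eta: "\<eta> > 0" "\<eta> < \<eta>0" "\<eta> \<notin> bad" by auto
    define t :: "real^2 \<Rightarrow> real^2" where
      "t b = vector [\<eta> * h (cell b) - s * of_int (fst (cell b)), - s * of_int (snd (cell b))]" for b
    define X1 where "X1 = (\<lambda>p. fst p + t (snd p)) ` Pc"
    define X2 where "X2 = (\<lambda>b. b + t b) ` Bc"
    have finX1: "finite X1" using finPc by (simp add: X1_def)
    have finX2: "finite X2" using finBc by (simp add: X2_def)
    have cX2: "card X2 \<le> n"
    proof -
      have "card X2 \<le> card Bc" unfolding X2_def by (rule card_image_le[OF finBc])
      also have "\<dots> \<le> card B" by (rule card_mono[OF AB(2) BcB])
      finally show ?thesis using AB by simp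
    qed
    have samecell: "cell b = cell b'" if "(a, b) \<in> Pc" "(a, b') \<in> Pc" for a b b'
    proof (rule ccontr)
      assume ne: "cell b \<noteq> cell b'"
      have d: "dist b b' \<le> 2"
      proof -
        have "dist b b' \<le> dist b a + dist a b'" by (rule dist_triangle)
        also have "\<dots> = 2" using that by (simp add: Pc_def P_def dist_commute)
        finally show ?thesis .
      qed
      have cc: "col b = col b'" using that by (simp add: Pc_def)
      have mpos: "int m > 0" using m1 by simp
      have "\<exists>i. \<lfloor>b$i / s\<rfloor> \<noteq> \<lfloor>b'$i / s\<rfloor> \<and> \<lfloor>b$i / s\<rfloor> mod int m = \<lfloor>b'$i / s\<rfloor> mod int m"
        using ne cc unfolding cell_def col_def by auto
      then obtain i where i: "\<lfloor>b$i / s\<rfloor> \<noteq> \<lfloor>b'$i / s\<rfloor>" "\<lfloor>b$i / s\<rfloor> mod int m = \<lfloor>b'$i / s\<rfloor> mod int m" by blast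
      have "\<bar>b$i / s - b'$i / s\<bar> > real_of_int (int m) - 1" by (rule floor_sep[OF mpos i(2) i(1)])
      then have "\<bar>b$i - b'$i\<bar> / s > real m - 1" using s0 by (simp add: diff_divide_distrib[symmetric])
      then have "\<bar>b$i - b'$i\<bar> > (real m - 1) * s" using s0 by (simp add: field_simps)
      moreover have "\<bar>b$i - b'$i\<bar> \<le> dist b b'"
        using component_le_norm_cart[of "b - b'" i] by (simp add: dist_norm)
      ultimately show False using d ms by linarith
    qed
    have cX1: "card X1 \<le> n"
    proof -
      define g where "g a = a + t (SOME b. (a, b) \<in> Pc)" for a
      have "X1 = g ` (fst ` Pc)"
      proof (rule set_eqI, rule iffI)
        fix x assume "x \<in> X1"
        then obtain a b where ab: "(a, b) \<in> Pc" "x = a + t b" by (auto simp: X1_def)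
        have "(a, SOME b. (a, b) \<in> Pc) \<in> Pc" using ab by (metis someI)
        then have "cell (SOME b. (a, b) \<in> Pc) = cell b" using samecell ab by blast
        then have "x = g a" using ab by (simp add: g_def t_def)
        then show "x \<in> g ` fst ` Pc" using ab by force
      next
        fix x assume "x \<in> g ` fst ` Pc"
        then obtain a b where ab: "(a, b) \<in> Pc" "x = g a" by force
        have "(a, SOME b. (a, b) \<in> Pc) \<in> Pc" using ab by (metis someI)
        then show "x \<in> X1" unfolding X1_def ab g_def by force
      qed
      then have "card X1 \<le> card (fst ` Pc)" using card_image_le[of "fst ` Pc" g] finPc by simp
      also have "\<dots> \<le> card A"
        by (rule card_mono[OF AB(1)]) (auto simp: Pc_def P_def)
      finally show ?thesis using AB by simp
    qed
    have coord1: "(b + t b)$1 \<ge> 0 \<and> (b + t b)$1 \<le> s + \<eta> * M" if "b \<in> Bc" for b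
    proof -
      have "s * of_int \<lfloor>b$1 / s\<rfloor> \<le> s * (b$1 / s)" using s0 by (intro mult_left_mono) auto
      then have fa: "s * of_int \<lfloor>b$1 / s\<rfloor> \<le> b$1" using s0 by simp
      have "s * (b$1 / s) < s * (of_int \<lfloor>b$1 / s\<rfloor> + 1)" using s0 by (intro mult_strict_left_mono) (linarith, simp)
      then have fb: "b$1 < s * of_int \<lfloor>b$1 / s\<rfloor> + s" using s0 by (simp add: algebra_simps)
      note f = fa fb
      have "h (cell b) \<le> M" using hM that by (simp add: K_def)
      then have "\<eta> * h (cell b) \<le> \<eta> * M" using eta by (simp add: mult_left_mono)
      moreover have "\<eta> * h (cell b) \<ge> 0" using eta h0 by simp
      ultimately show ?thesis using f by (simp add: t_def cell_def)
    qed
    have coord2: "(b + t b)$2 \<ge> 0 \<and> (b + t b)$2 \<le> s" if "b \<in> Bc" for b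
    proof -
      have "s * of_int \<lfloor>b$2 / s\<rfloor> \<le> s * (b$2 / s)" using s0 by (intro mult_left_mono) auto
      then have fa: "s * of_int \<lfloor>b$2 / s\<rfloor> \<le> b$2" using s0 by simp
      have "s * (b$2 / s) < s * (of_int \<lfloor>b$2 / s\<rfloor> + 1)" using s0 by (intro mult_strict_left_mono) (linarith, simp)
      then have fb: "b$2 < s * of_int \<lfloor>b$2 / s\<rfloor> + s" using s0 by (simp add: algebra_simps)
      note f = fa fb
      then show ?thesis by (simp add: t_def cell_def)
    qed
    have etaM: "\<eta> * M \<le> s"
    proof -
      have "\<eta> * M \<le> \<eta>0 * M" using eta M0 by (simp add: mult_right_mono)
      also have "\<eta>0 * M \<le> s" unfolding \<eta>0_def using s0 M0 by (simp add: field_simps)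
      finally show ?thesis .
    qed
    have diam: "diameter X2 \<le> \<epsilon>"
    proof (rule diameter_le)
      show "X2 \<noteq> {} \<or> 0 \<le> \<epsilon>" using assms by simp
      fix x y assume "x \<in> X2" "y \<in> X2"
      then obtain b b' where bb: "b \<in> Bc" "b' \<in> Bc" "x = b + t b" "y = b' + t b'" by (auto simp: X2_def)
      have "norm (x - y) \<le> (\<Sum>i\<in>UNIV. \<bar>(x - y)$i\<bar>)" by (rule norm_le_l1_cart)
      also have "\<dots> = \<bar>x$1 - y$1\<bar> + \<bar>x$2 - y$2\<bar>" by (simp add: sum_2)
      also have "\<dots> \<le> (s + \<eta> * M) + s"
        using coord1[OF bb(1)] coord1[OF bb(2)] coord2[OF bb(1)] coord2[OF bb(2)] unfolding bb(3,4) by linarith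
      also have "\<dots> \<le> \<epsilon>" using etaM by (simp add: s_def)
      finally show "norm (x - y) \<le> \<epsilon>" .
    qed
    have injB: "b = b'" if "b \<in> Bc" "b' \<in> Bc" "b + t b = b' + t b'" for b b'
    proof (cases "cell b = cell b'")
      case True
      then have "t b = t b'" by (simp add: t_def)
      then show ?thesis using that by simp
    next
      case False
      have hne: "h (cell b) - h (cell b') \<noteq> 0" using False hinj[of "cell b" "cell b'"] by auto
      have "(b + t b)$1 = (b' + t b')$1" using that by simp
      then have "b$1 + (\<eta> * h (cell b) - s * of_int (fst (cell b))) = b'$1 + (\<eta> * h (cell b') - s * of_int (fst (cell b')))"
        by (simp add: t_def)
      then have "\<eta> * (h (cell b) - h (cell b')) = (b'$1 - s * of_int (fst (cell b'))) - (b$1 - s * of_int (fst (cell b)))"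
        by (simp add: algebra_simps)
      then have "\<eta> = ((b'$1 - s * of_int (fst (cell b'))) - (b$1 - s * of_int (fst (cell b)))) / (h (cell b) - h (cell b'))"
        using hne by (simp add: field_simps)
      then have "\<eta> \<in> bad" unfolding bad_def using that(1,2) by force
      then show ?thesis using eta by simp
    qed
    define \<phi> where "\<phi> p = (fst p + t (snd p), snd p + t (snd p))" for p
    have injphi: "inj_on \<phi> Pc"
    proof (rule inj_onI)
      fix p q assume pq: "p \<in> Pc" "q \<in> Pc" "\<phi> p = \<phi> q"
      have sb: "snd p \<in> Bc" "snd q \<in> Bc" using pq by (auto simp: Bc_def)
      have "snd p = snd q" using injB[OF sb] pq(3) by (simp add: \<phi>_def)
      moreover then have "fst p = fst q" using pq(3) by (simp add: \<phi>_def)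
      ultimately show "p = q" by (simp add: prod_eq_iff)
    qed
    have sub: "\<phi> ` Pc \<subseteq> {(x1, x2). x1 \<in> X1 \<and> x2 \<in> X2 \<and> dist x1 x2 = 1}"
    proof
      fix z assume "z \<in> \<phi> ` Pc"
      then obtain a b where ab: "(a, b) \<in> Pc" "z = \<phi> (a, b)" by force
      have "dist (a + t b) (b + t b) = 1" using ab(1) by (simp add: Pc_def P_def)
      moreover have "a + t b \<in> X1" using ab(1) unfolding X1_def by force
      moreover have "b + t b \<in> X2" using ab(1) unfolding X2_def Bc_def by force
      ultimately show "z \<in> {(x1, x2). x1 \<in> X1 \<and> x2 \<in> X2 \<and> dist x1 x2 = 1}"
        using ab(2) by (simp add: \<phi>_def)
    qed
    have finU: "finite {(x1, x2). x1 \<in> X1 \<and> x2 \<in> X2 \<and> dist x1 x2 = 1}"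
      by (rule finite_subset[of _ "X1 \<times> X2"]) (auto simp: finX1 finX2)
    have "card Pc = card (\<phi> ` Pc)" using card_image[OF injphi] by simp
    also have "\<dots> \<le> unit_pairs X1 X2" unfolding unit_pairs_def by (rule card_mono[OF finU sub])
    finally have cPc: "card Pc \<le> unit_pairs X1 X2" .
    have "\<gamma> * real (u2 n n) = real (card P) / real (card C)"
      unfolding \<gamma>_def C_def AB(5)[symmetric] unit_pairs_def P_def by simp
    also have "\<dots> \<le> real (card Pc)" using cbig by (simp add: Pc_def)
    also have "\<dots> \<le> real (unit_pairs X1 X2)" using cPc by simp
    finally have "real (unit_pairs X1 X2) \<ge> \<gamma> * real (u2 n n)" .
    then show "\<exists>X1 X2 :: (real^2) set.
        finite X1 \<and> finite X2 \<and> card X1 \<le> n \<and> card X2 \<le> n \<and>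
        diameter X2 \<le> \<epsilon> \<and>
        real (unit_pairs X1 X2) \<ge> \<gamma> * real (u2 n n)"
      using finX1 finX2 cX1 cX2 diam by blast
  qed
  then show ?thesis using g0 by blast
qed

end
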